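(* Let $(V,A,\succ)$ be an election, $\mathcal{I}$ a probability distribution on $[0,1]$, and let $(x,y,p)$ be a LEO with income distribution $\mathcal{I}$ and total budget $B=1$. Then $\sum_{a\in A}y_a=1$ and $x_{v,a}=y_a$ for all $a\in A$ and $v\in V$.
   Context: An election $(V,A,\succ)$: finite nonempty voter set $V$, finite candidate set $A$, strict linear order $\succ_v$ on $A$ per voter. Extend $\succ_v$ to $A\cup\{\emptyset\}$ with $\emptyset$ strictly below all candidates. Given prices $p_v\in[0,1]^{A\cup\{\emptyset\}}$ with $p_{v,\emptyset}=0$ and income $b\ge0$, voter $v$'s demand is the $\succ_v$-maximal element of $\{a\in A\cup\{\emptyset\}: p_{v,a}\le b\}$; the random demand $\mathcal{D}_v(p_v,\mathcal{I})$ is this demand with $b\sim\mathcal{I}$. A LEO $(x,y,p)$ with income $\mathcal{I}$ and budget $B>0$ consists of prices $p_v\in[0,1]^{A\cup\{\emptyset\}}$ with $p_{v,\emptyset}=0$ and consumptions $x_v\in[0,1]^{A\cup\{\emptyset\}}$ for each $v\in V$, and $y\in[0,B]^A$, such that: (1) $x_{v,a}=\Pr[\mathcal{D}_v(p_v,\mathcal{I})=a]$ for all $a\in A\cup\{\emptyset\}$; (2) for each $a\in A$, $x_{v,a}\le y_a$, and if $x_{v,a}<y_a$ then $p_{v,a}=0$; (3) $y$ maximizes $\sum_{a\in A}\big(\sum_{v\in V}p_{v,a}\big)z_a$ over $z\in\mathbb{R}_{\ge0}^A$ with $\sum_a z_a=B$. *)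

theory Defs
  imports "HOL-Probability.Probability"
begin

text \<open>Candidates are of type 'a; the option type models A extended by the empty
  outcome: None is the empty outcome, Some a is candidate a.
  A preference is a relation r with (a, b) in r meaning a is strictly preferred to b.\<close>

definition election :: "'v set \<Rightarrow> 'a set \<Rightarrow> ('v \<Rightarrow> ('a \<times> 'a) set) \<Rightarrow> bool" where
  "election V A pref \<longleftrightarrow> finite V \<and> V \<noteq> {} \<and> finite A \<and>
     (\<forall>v\<in>V. strict_linear_order_on A (pref v))"

definition opts :: "'a set \<Rightarrow> 'a option set" where
  "opts A = insert None (Some ` A)"

fun ext_pref :: "('a \<times> 'a) set \<Rightarrow> 'a option \<Rightarrow> 'a option \<Rightarrow> bool" where
  "ext_pref r (Some a) (Some b) = ((a, b) \<in> r)"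
| "ext_pref r (Some a) None = True"
| "ext_pref r None _ = False"

definition demand :: "'a set \<Rightarrow> ('a \<times> 'a) set \<Rightarrow> ('a option \<Rightarrow> real) \<Rightarrow> real \<Rightarrow> 'a option" where
  "demand A r q b = (THE c. c \<in> opts A \<and> q c \<le> b \<and>
      (\<forall>c'\<in>opts A. q c' \<le> b \<longrightarrow> c' \<noteq> c \<longrightarrow> ext_pref r c c'))"

definition income_dist :: "real measure \<Rightarrow> bool" where
  "income_dist I \<longleftrightarrow> prob_space I \<and> sets I = sets borel \<and> measure I {0..1} = 1"

definition LEO :: "'v set \<Rightarrow> 'a set \<Rightarrow> ('v \<Rightarrow> ('a \<times> 'a) set) \<Rightarrow> real measure \<Rightarrow> real \<Rightarrow>
    ('v \<Rightarrow> 'a option \<Rightarrow> real) \<Rightarrow> ('a \<Rightarrow> real) \<Rightarrow> ('v \<Rightarrow> 'a option \<Rightarrow> real) \<Rightarrow> bool" where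
  "LEO V A pref I B x y p \<longleftrightarrow>
     (\<forall>v\<in>V. p v None = 0 \<and> (\<forall>c\<in>opts A. 0 \<le> p v c \<and> p v c \<le> 1)
                       \<and> (\<forall>c\<in>opts A. 0 \<le> x v c \<and> x v c \<le> 1)) \<and>
     (\<forall>a\<in>A. 0 \<le> y a \<and> y a \<le> B) \<and>
     (\<forall>v\<in>V. \<forall>c\<in>opts A. x v c = measure I {b \<in> space I. demand A (pref v) (p v) b = c}) \<and>
     (\<forall>v\<in>V. \<forall>a\<in>A. x v (Some a) \<le> y a \<and> (x v (Some a) < y a \<longrightarrow> p v (Some a) = 0)) \<and>
     ((\<forall>a\<in>A. 0 \<le> y a) \<and> (\<Sum>a\<in>A. y a) = B \<and>
      (\<forall>z. (\<forall>a\<in>A. 0 \<le> z a) \<and> (\<Sum>a\<in>A. z a) = B \<longrightarrow>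
          (\<Sum>a\<in>A. (\<Sum>v\<in>V. p v (Some a)) * z a) \<le> (\<Sum>a\<in>A. (\<Sum>v\<in>V. p v (Some a)) * y a)))"

end

theory Submission imports Defs begin

lemma ext_total: "strict_linear_order_on A r \<Longrightarrow> c \<in> opts A \<Longrightarrow> d \<in> opts A \<Longrightarrow> c \<noteq> d \<Longrightarrow> ext_pref r c d \<or> ext_pref r d c"
  by (cases c; cases d) (auto simp: opts_def strict_linear_order_on_def total_on_def)

lemma ext_trans: "strict_linear_order_on A r \<Longrightarrow> ext_pref r c d \<Longrightarrow> ext_pref r d e \<Longrightarrow> ext_pref r c e"
  by (cases c; cases d; cases e) (auto simp: strict_linear_order_on_def dest: transD)

lemma ext_asym: "strict_linear_order_on A r \<Longrightarrow> ext_pref r c d \<Longrightarrow> \<not> ext_pref r d c"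
  by (cases c; cases d) (auto simp: strict_linear_order_on_def irrefl_def dest: transD)

lemma has_max:
  assumes "strict_linear_order_on A r" "finite S" "S \<noteq> {}" "S \<subseteq> opts A"
  shows "\<exists>m\<in>S. \<forall>c\<in>S. c \<noteq> m \<longrightarrow> ext_pref r m c"
  using assms(2,3,4)
proof (induction S rule: finite_ne_induct)
  case (singleton x) then show ?case by auto
next
  case (insert x F)
  then obtain m where m: "m \<in> F" "\<forall>c\<in>F. c \<noteq> m \<longrightarrow> ext_pref r m c" by auto
  show ?case
  proof (cases "ext_pref r x m")
    case True
    then show ?thesis using m ext_trans[OF assms(1)] by (metis insert_iff)
  next
    case False
    then have "ext_pref r m x" using ext_total[OF assms(1), of m x] m insert by auto
    then show ?thesis using m by auto
  qed
qed

lemma demand_spec: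
  assumes "finite A" "strict_linear_order_on A r" "q None = 0" "0 \<le> b"
  shows "demand A r q b \<in> opts A \<and> q (demand A r q b) \<le> b \<and>
    (\<forall>c'\<in>opts A. q c' \<le> b \<longrightarrow> c' \<noteq> demand A r q b \<longrightarrow> ext_pref r (demand A r q b) c')"
proof -
  let ?S = "{c \<in> opts A. q c \<le> b}"
  have "finite ?S" using assms(1) by (simp add: opts_def)
  moreover have "None \<in> ?S" using assms by (simp add: opts_def)
  ultimately obtain m where m: "m \<in> ?S" "\<forall>c\<in>?S. c \<noteq> m \<longrightarrow> ext_pref r m c"
    using has_max[OF assms(2), of ?S] by blast
  have "\<exists>!c. c \<in> opts A \<and> q c \<le> b \<and> (\<forall>c'\<in>opts A. q c' \<le> b \<longrightarrow> c' \<noteq> c \<longrightarrow> ext_pref r c c')"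
  proof
    show "m \<in> opts A \<and> q m \<le> b \<and> (\<forall>c'\<in>opts A. q c' \<le> b \<longrightarrow> c' \<noteq> m \<longrightarrow> ext_pref r m c')"
      using m by auto
  next
    fix c assume c: "c \<in> opts A \<and> q c \<le> b \<and> (\<forall>c'\<in>opts A. q c' \<le> b \<longrightarrow> c' \<noteq> c \<longrightarrow> ext_pref r c c')"
    show "c = m"
    proof (rule ccontr)
      assume "c \<noteq> m"
      then have "ext_pref r c m" "ext_pref r m c" using c m by auto
      then show False using ext_asym[OF assms(2)] by blast
    qed
  qed
  then show ?thesis unfolding demand_def by (rule theI')
qed

definition gsel :: "('a \<times> 'a) set \<Rightarrow> 'a option set \<Rightarrow> 'a option" where
  "gsel r T = (THE c. c \<in> T \<and> (\<forall>c'\<in>T. c' \<noteq> c \<longrightarrow> ext_pref r c c'))"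

lemma demand_gsel: "demand A r q b = gsel r {c \<in> opts A. q c \<le> b}"
  unfolding demand_def gsel_def by (rule arg_cong[where f=The]) auto

lemma demand_meas:
  assumes "finite A"
  shows "{b. demand A r q b = c} \<in> sets borel"
proof -
  have eq: "{b. demand A r q b = c} = (\<Union>T\<in>{T\<in>Pow (opts A). gsel r T = c}. \<Inter>d\<in>opts A. (if d \<in> T then {q d..} else {..<q d}))"
  proof (intro set_eqI iffI)
    fix b assume "b \<in> {b. demand A r q b = c}"
    then have 1: "gsel r {c \<in> opts A. q c \<le> b} = c" by (simp add: demand_gsel)
    have 2: "b \<in> (if d \<in> {c \<in> opts A. q c \<le> b} then {q d..} else {..<q d})" if "d \<in> opts A" for d
      using that by (cases "q d \<le> b") auto
    show "b \<in> (\<Union>T\<in>{T\<in>Pow (opts A). gsel r T = c}. \<Inter>d\<in>opts A. (if d \<in> T then {q d..} else {..<q d}))"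
      apply (rule UN_I[of "{c \<in> opts A. q c \<le> b}"])
      using 1 apply blast
      using 2 by blast
  next
    fix b assume "b \<in> (\<Union>T\<in>{T\<in>Pow (opts A). gsel r T = c}. \<Inter>d\<in>opts A. (if d \<in> T then {q d..} else {..<q d}))"
    then obtain T where T: "T \<subseteq> opts A" "\<forall>d\<in>opts A. (q d \<le> b \<longleftrightarrow> d \<in> T)" "gsel r T = c"
    proof -
      obtain T where T0: "T \<in> {T\<in>Pow (opts A). gsel r T = c}" and T1: "\<And>d. d \<in> opts A \<Longrightarrow> b \<in> (if d \<in> T then {q d..} else {..<q d})"
        using \<open>b \<in> _\<close> by blast
      have "\<forall>d\<in>opts A. (q d \<le> b \<longleftrightarrow> d \<in> T)"
      proof
        fix d assume "d \<in> opts A"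
        from T1[OF this] show "(q d \<le> b \<longleftrightarrow> d \<in> T)" by (cases "d \<in> T") auto
      qed
      with T0 show ?thesis using that by blast
    qed
    then have "T = {c \<in> opts A. q c \<le> b}" by blast
    then show "b \<in> {b. demand A r q b = c}" using T by (simp add: demand_gsel)
  qed
  have fin: "finite (opts A)" using assms by (simp add: opts_def)
  have "(\<Union>T\<in>{T\<in>Pow (opts A). gsel r T = c}. \<Inter>d\<in>opts A. (if d \<in> T then {q d..} else {..<q d})) \<in> sets borel"
    using fin by (intro sets.finite_UN sets.finite_INT) (simp_all add: opts_def)
  then show ?thesis unfolding eq .
qed

lemma main_eq:
  assumes el: "election V A pref" and inc: "income_dist I" and leo: "LEO V A pref I 1 x y p"
    and v: "v \<in> V" and a0: "a0 \<in> A"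
  shows "x v (Some a0) = y a0"
proof (rule ccontr)
  assume ne: "x v (Some a0) \<noteq> y a0"
  have le: "\<And>a. a \<in> A \<Longrightarrow> x v (Some a) \<le> y a" using leo v unfolding LEO_def by blast
  have lt: "x v (Some a0) < y a0" using le[OF a0] ne by simp
  have p0: "p v (Some a0) = 0" using leo v a0 lt unfolding LEO_def by blast
  have pN: "p v None = 0" using leo v unfolding LEO_def by blast
  have sy: "(\<Sum>a\<in>A. y a) = 1" using leo unfolding LEO_def by blast
  have finA: "finite A" and slo: "strict_linear_order_on A (pref v)" using el v unfolding election_def by auto
  have ps: "prob_space I" and sI: "sets I = sets borel" and m01: "measure I {0..1} = 1"
    using inc unfolding income_dist_def by auto
  interpret prob_space I by (rule ps)
  have spI: "space I = UNIV" using sets_eq_imp_space_eq[OF sI] by simp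
  define D where "D c = {b \<in> space I. demand A (pref v) (p v) b = c}" for c
  have xD: "\<And>c. c \<in> opts A \<Longrightarrow> x v c = measure I (D c)" using leo v unfolding LEO_def D_def by blast
  have Dm: "D c \<in> sets I" for c using demand_meas[OF finA, of "pref v" "p v" c] sI spI
    unfolding D_def by simp
  have finO: "finite (opts A)" using finA by (simp add: opts_def)
  have disj: "disjoint_family_on D (opts A)" unfolding disjoint_family_on_def D_def by auto
  have U: "measure I (\<Union>c\<in>opts A. D c) = (\<Sum>c\<in>opts A. measure I (D c))"
    by (rule measure_finite_Union[OF finO _ disj]) (use Dm in auto)
  have sub: "{0..1} \<subseteq> (\<Union>c\<in>opts A. D c)"
  proof
    fix b :: real assume "b \<in> {0..1}"
    then have "demand A (pref v) (p v) b \<in> opts A" using demand_spec[OF finA slo, of "p v"] pN by auto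
    then show "b \<in> (\<Union>c\<in>opts A. D c)" unfolding D_def spI by auto
  qed
  have "1 \<le> measure I (\<Union>c\<in>opts A. D c)"
    using finite_measure_mono[OF sub] Dm m01 by (metis sets.finite_UN finO)
  then have s1: "1 \<le> (\<Sum>c\<in>opts A. x v c)" using U xD by simp
  have DN: "D None \<subseteq> space I - {0..1}"
  proof
    fix b assume b: "b \<in> D None"
    show "b \<in> space I - {0..1}"
    proof (rule ccontr)
      assume "b \<notin> space I - {0..1}"
      then have b0: "0 \<le> b" using spI by auto
      have ds: "demand A (pref v) (p v) b \<in> opts A \<and> p v (demand A (pref v) (p v) b) \<le> b \<and>
        (\<forall>c'\<in>opts A. p v c' \<le> b \<longrightarrow> c' \<noteq> demand A (pref v) (p v) b \<longrightarrow> ext_pref (pref v) (demand A (pref v) (p v) b) c')"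
        by (rule demand_spec[OF finA slo, of "p v", OF pN b0])
      have dn: "demand A (pref v) (p v) b = None" using b unfolding D_def by simp
      have "Some a0 \<in> opts A" using a0 by (simp add: opts_def)
      then have "ext_pref (pref v) None (Some a0)" using ds dn p0 b0 by auto
      then show False by simp
    qed
  qed
  have "measure I (D None) \<le> measure I (space I - {0..1})"
    by (rule finite_measure_mono[OF DN]) (use sI spI in auto)
  also have "\<dots> = 0" using prob_compl[of "{0..1}"] m01 sI by simp
  finally have xN: "x v None \<le> 0" using xD[of None] by (simp add: opts_def)
  have "(\<Sum>c\<in>opts A. x v c) = x v None + (\<Sum>a\<in>A. x v (Some a))"
    unfolding opts_def using finA by (simp add: sum.reindex)
  then have "1 \<le> (\<Sum>a\<in>A. x v (Some a))" using s1 xN by simp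
  moreover have "(\<Sum>a\<in>A. x v (Some a)) < (\<Sum>a\<in>A. y a)"
    by (rule sum_strict_mono_ex1[OF finA]) (use le lt a0 in auto)
  ultimately show False using sy by simp
qed

theorem mainTheorem7:
  fixes V :: "'v set" and A :: "'a set" and pref :: "'v \<Rightarrow> ('a \<times> 'a) set"
    and I :: "real measure"
    and x :: "'v \<Rightarrow> 'a option \<Rightarrow> real" and y :: "'a \<Rightarrow> real"
    and p :: "'v \<Rightarrow> 'a option \<Rightarrow> real"
  assumes "election V A pref"
    and "income_dist I"
    and "LEO V A pref I 1 x y p"
  shows "(\<Sum>a\<in>A. y a) = 1 \<and> (\<forall>a\<in>A. \<forall>v\<in>V. x v (Some a) = y a)"
  using main_eq[OF assms] assms(3) unfolding LEO_def by blast

end
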